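(* Let $T$ be a rooted binary tree with black/white-coloured leaves and the induced node colouring and classification as described in the context, and suppose $T$ contains more than one maximal black subtree. Then no SPR operation on $T$ belonging to the class $(\mathrm{G},\ast,\ast,\ast)$ (i.e. pruning a grey node) produces a compatible tree.
   Context: All trees are rooted binary trees; every non-leaf node has exactly two children and every non-root node $n$ has a parent $\mathrm{pa}(n)$. A "subtree" always means a node together with all of its descendants. Colouring: each leaf is coloured black (B) or white (W); an internal node is black if both children are black, white if both children are white, and grey (G) otherwise. A subtree is black (resp. white) if all its nodes are black (resp. white); it is maximal if no strictly larger subtree containing it is black (resp. white). Classification: a black or white node is of type "r" if it is the root of a maximal subtree of its own colour, and of type "b" otherwise; all grey nodes are of type "b" by convention. A tree is compatible if it contains at most one maximal black subtree. SPR operation $(u,v)$ on $T$: $u$ is a non-root node, $v$ is a node with $v\notin\{u,\mathrm{pa}(u)\}$ and $v$ not a descendant of $u$; the subtree rooted at $u$ is pruned (the edge to $u$ is removed and $\mathrm{pa}(u)$ deleted, its other child taking its place), then regrafted by inserting a new node on the edge from $v$ to its parent (or as a new root above $v$ if $v$ is the root) whose two children are $v$ and $u$; colours of the resulting tree are recomputed by the same rule. The operation belongs to class $(x,y,z,w)$ where $x,z\in\{\mathrm{B},\mathrm{W},\mathrm{G}\}$ are the colours in $T$ of $u$ and $v$, and $y,w\in\{\mathrm{r},\mathrm{b}\}$ their classifications in $T$; $\ast$ denotes any value. *)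

theory Defs
  imports Main
begin

(* Nodes are addressed by positions: lists of
   booleans (False = left child, True = right child), the root being [].
   The parent of a non-root position p is butlast p; q is a descendant of p
   iff p is a prefix of q. *)

datatype leafcol = LB | LW

datatype tree = Leaf leafcol | Node tree tree

datatype colour = B | W | G

fun col :: "tree \<Rightarrow> colour" where
  "col (Leaf LB) = B"
| "col (Leaf LW) = W"
| "col (Node l r) =
     (if col l = B \<and> col r = B then B
      else if col l = W \<and> col r = W then W else G)"

fun positions :: "tree \<Rightarrow> bool list set" where
  "positions (Leaf c) = {[]}"
| "positions (Node l r) =
     insert [] ((Cons False) ` positions l \<union> (Cons True) ` positions r)"

fun subt :: "tree \<Rightarrow> bool list \<Rightarrow> tree" where
  "subt t [] = t"
| "subt (Node l r) (False # p) = subt l p"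
| "subt (Node l r) (True # p) = subt r p"
| "subt (Leaf c) (b # p) = Leaf c"

fun repl :: "tree \<Rightarrow> bool list \<Rightarrow> tree \<Rightarrow> tree" where
  "repl t [] s = s"
| "repl (Node l r) (False # p) s = Node (repl l p s) r"
| "repl (Node l r) (True # p) s = Node l (repl r p s)"
| "repl (Leaf c) (b # p) s = Leaf c"

definition node_col :: "tree \<Rightarrow> bool list \<Rightarrow> colour" where
  "node_col T p = col (subt T p)"

definition strict_anc :: "bool list \<Rightarrow> bool list \<Rightarrow> bool" where
  "strict_anc q p \<longleftrightarrow> (\<exists>w. w \<noteq> [] \<and> p = q @ w)"

definition black_subtree :: "tree \<Rightarrow> bool list \<Rightarrow> bool" where
  "black_subtree T p \<longleftrightarrow> p \<in> positions T \<and>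
     (\<forall>w. p @ w \<in> positions T \<longrightarrow> node_col T (p @ w) = B)"

definition max_black_roots :: "tree \<Rightarrow> bool list set" where
  "max_black_roots T = {p. black_subtree T p \<and>
      \<not> (\<exists>q. strict_anc q p \<and> black_subtree T q)}"

definition compatible :: "tree \<Rightarrow> bool" where
  "compatible T \<longleftrightarrow> card (max_black_roots T) \<le> 1"

definition valid_spr :: "tree \<Rightarrow> bool list \<Rightarrow> bool list \<Rightarrow> bool" where
  "valid_spr T u v \<longleftrightarrow> u \<in> positions T \<and> u \<noteq> [] \<and> v \<in> positions T \<and>
     v \<noteq> butlast u \<and> \<not> (\<exists>w. v = u @ w)"

(* SPR (u,v): prune the subtree at u (pa(u) is replaced by the sibling of u),
   then regraft it on the edge above (the new position of) v. *)
definition spr :: "tree \<Rightarrow> bool list \<Rightarrow> bool list \<Rightarrow> tree" where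
  "spr T u v =
     (let a = butlast u;
          s = a @ [\<not> last u];
          T' = repl T a (subt T s);
          v' = (if take (length s) v = s then a @ drop (length s) v else v)
      in repl T' v' (Node (subt T' v') (subt T u)))"

end

theory Submission imports Defs begin

fun hasB :: "tree \<Rightarrow> bool" where
  "hasB (Leaf c) = (c = LB)"
| "hasB (Node l r) = (hasB l \<or> hasB r)"

fun mb :: "tree \<Rightarrow> nat" where
  "mb (Leaf c) = (if c = LB then 1 else 0)"
| "mb (Node l r) = (if col (Node l r) = B then 1 else mb l + mb r)"

lemma col_notW_hasB: "col t \<noteq> W \<Longrightarrow> hasB t"
  by (induction t rule: col.induct) (auto split: if_splits)

lemma mb_pos: "(mb t > 0) = hasB t"
  by (induction t) (auto dest: col_notW_hasB)

lemma col_B_sub: "w \<in> positions t \<Longrightarrow> col t = B \<Longrightarrow> col (subt t w) = B"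
  by (induction t arbitrary: w) (auto split: if_splits)

lemma subt_Leaf[simp]: "subt (Leaf c) w = Leaf c" by (cases w) auto

lemma bs_iff: "black_subtree T p \<longleftrightarrow> p \<in> positions T \<and> col (subt T p) = B"
proof
  assume "black_subtree T p" then show "p \<in> positions T \<and> col (subt T p) = B"
    unfolding black_subtree_def node_col_def by (metis append_Nil2)
next
  assume a: "p \<in> positions T \<and> col (subt T p) = B"
  have "subt T (p @ w) = subt (subt T p) w" for w
    by (induction T p rule: subt.induct) auto
  moreover have "p @ w \<in> positions T \<Longrightarrow> w \<in> positions (subt T p)" for w
    using a by (induction T p rule: subt.induct) auto
  ultimately show "black_subtree T p" using a unfolding black_subtree_def node_col_def
    by (metis col_B_sub)
qed

lemma sa_Nil: "\<not> strict_anc q []" unfolding strict_anc_def by auto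
lemma sa_Cons: "strict_anc q (b#p) \<longleftrightarrow> q = [] \<or> (\<exists>q'. q = b#q' \<and> strict_anc q' p)"
  unfolding strict_anc_def by (cases q) auto

lemma mbr_mem: "p \<in> max_black_roots T \<longleftrightarrow> p \<in> positions T \<and> col (subt T p) = B \<and>
   (\<forall>q. strict_anc q p \<longrightarrow> \<not> (q \<in> positions T \<and> col (subt T q) = B))"
  unfolding max_black_roots_def bs_iff by auto

lemma mbr_Leaf: "max_black_roots (Leaf c) = (if c = LB then {[]} else {})"
  by (cases c) (auto simp: mbr_mem sa_Nil)

lemma mbr_Node: "max_black_roots (Node l r) = (if col (Node l r) = B then {[]} else
   Cons False ` max_black_roots l \<union> Cons True ` max_black_roots r)"
proof (rule set_eqI)
  fix p show "p \<in> max_black_roots (Node l r) \<longleftrightarrow> p \<in> (if col (Node l r) = B then {[]} else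
   Cons False ` max_black_roots l \<union> Cons True ` max_black_roots r)"
  proof (cases p)
    case Nil then show ?thesis by (auto simp: mbr_mem sa_Nil)
  next
    case (Cons b p')
    show ?thesis
    proof (cases "col (Node l r) = B")
      case True then show ?thesis using Cons by (auto simp: mbr_mem sa_Cons)
    next
      case False
      then show ?thesis using Cons
        apply (cases b)
        apply (simp_all add: mbr_mem sa_Cons image_iff)
        apply (auto simp: image_iff)
        done
    qed
  qed
qed

lemma fin_mbr: "finite (max_black_roots T)"
  by (induction T) (auto simp: mbr_Leaf mbr_Node)

lemma card_mbr: "card (max_black_roots T) = mb T"
proof (induction T)
  case (Leaf c) then show ?case by (simp add: mbr_Leaf)
next
  case (Node l r)
  show ?case
  proof (cases "col (Node l r) = B")
    case True then show ?thesis by (simp add: mbr_Node del: col.simps)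
  next
    case False
    have "card (Cons False ` max_black_roots l \<union> Cons True ` max_black_roots r)
       = card (Cons False ` max_black_roots l) + card (Cons True ` max_black_roots r)"
      by (rule card_Un_disjoint) (auto simp: fin_mbr)
    also have "\<dots> = mb l + mb r" using Node by (simp add: card_image)
    finally show ?thesis using False by (simp add: mbr_Node del: col.simps)
  qed
qed

lemma nil_pos[simp]: "[] \<in> positions t" by (cases t) auto

lemma subt_app: "subt T (p @ w) = subt (subt T p) w"
  by (induction T p rule: subt.induct) auto

lemma pos_app: "p @ w \<in> positions T \<longleftrightarrow> p \<in> positions T \<and> w \<in> positions (subt T p)"
  by (induction T p rule: subt.induct) auto

lemma subt_repl: "a \<in> positions T \<Longrightarrow> subt (repl T a x) a = x"
  by (induction T a x rule: repl.induct) auto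

lemma pos_repl_in: "a \<in> positions T \<Longrightarrow> w \<in> positions x \<Longrightarrow> a @ w \<in> positions (repl T a x)"
  by (induction T a x rule: repl.induct) auto

lemma pos_repl_out: "p \<in> positions T \<Longrightarrow> \<not> (\<exists>w. w \<noteq> [] \<and> p = a @ w) \<Longrightarrow> p \<in> positions (repl T a x)"
proof (induction T a x arbitrary: p rule: repl.induct)
  case (2 l r p' s)
  then show ?case by (cases p) auto
next
  case (3 l r p' s)
  then show ?case by (cases p) auto
qed auto

lemma hasB_sub: "a \<in> positions T \<Longrightarrow> hasB (subt T a) \<Longrightarrow> hasB T"
  by (induction T a rule: subt.induct) auto

lemma ins_lem: "v \<in> positions T \<Longrightarrow> col g = G \<Longrightarrow>
   col (repl T v (Node (subt T v) g)) = G \<and> mb (repl T v (Node (subt T v) g)) \<ge> mb g + (if hasB T then 1 else 0)"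
proof (induction T v "Node (subt T v) g" rule: repl.induct)
  case (1 t)
  then show ?case using mb_pos[of t] by auto
next
  case (2 l r p)
  then show ?case using mb_pos[of r] by auto
next
  case (3 l r p)
  then show ?case using mb_pos[of l] by auto
qed auto

lemma prune_lem: "a \<in> positions T \<Longrightarrow> \<not> hasB (repl T a x) \<Longrightarrow> mb T = mb (subt T a)"
proof (induction T a x rule: repl.induct)
  case (2 l r p s)
  then show ?case using mb_pos[of r] col_notW_hasB[of r] by auto
next
  case (3 l r p s)
  then show ?case using mb_pos[of l] col_notW_hasB[of l] by auto
qed auto

theorem lemma5:
  fixes T :: tree and u v :: "bool list"
  assumes "card (max_black_roots T) > 1"
    and "valid_spr T u v"
    and "node_col T u = G"
  shows "\<not> compatible (spr T u v)"
proof -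
  define a where "a = butlast u"
  define bu where "bu = last u"
  define s where "s = a @ [\<not> bu]"
  define T' where "T' = repl T a (subt T s)"
  define v' where "v' = (if take (length s) v = s then a @ drop (length s) v else v)"
  define g where "g = subt T u"
  have uP: "u \<in> positions T" "u \<noteq> []" "v \<in> positions T" "v \<noteq> a" "\<not> (\<exists>w. v = u @ w)"
    using assms(2) unfolding valid_spr_def a_def by auto
  have ua: "u = a @ [bu]" unfolding a_def bu_def using uP(2) by simp
  have gG: "col g = G" using assms(3) unfolding g_def node_col_def .
  have aP: "a \<in> positions T" and buP: "[bu] \<in> positions (subt T a)"
    using uP(1) pos_app[of a "[bu]" T] ua by auto
  obtain l r where lr: "subt T a = Node l r"
    using buP by (cases "subt T a") auto
  have sP: "s \<in> positions T" using aP lr pos_app[of a "[\<not> bu]" T] unfolding s_def by auto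
  have gs: "g = (if bu then r else l)" "subt T s = (if bu then l else r)"
    unfolding g_def s_def using ua lr subt_app[of T a] by (cases bu; simp)+
  have v'P: "v' \<in> positions T'"
  proof (cases "take (length s) v = s")
    case True
    then have "v = s @ drop (length s) v" by (metis append_take_drop_id)
    then have "drop (length s) v \<in> positions (subt T s)" using uP(3) pos_app by metis
    then show ?thesis using True aP unfolding v'_def T'_def by (simp add: pos_repl_in)
  next
    case False
    have "\<not> (\<exists>w. w \<noteq> [] \<and> v = a @ w)"
    proof
      assume "\<exists>w. w \<noteq> [] \<and> v = a @ w"
      then obtain c w where cw: "v = a @ c # w" by (metis neq_Nil_conv)
      show False
      proof (cases "c = bu")
        case True then show False using cw uP(5) ua by auto
      next
        case False then have "c = (\<not> bu)" by auto
        then show False using cw \<open>\<not> take (length s) v = s\<close> unfolding s_def by simp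
      qed
    qed
    then show ?thesis using False uP(3) unfolding v'_def T'_def by (simp add: pos_repl_out)
  qed
  define S where "S = repl T' v' (Node (subt T' v') g)"
  have S: "spr T u v = S"
    unfolding spr_def S_def T'_def v'_def g_def a_def bu_def s_def Let_def by simp
  have ins: "mb S \<ge> mb g + (if hasB T' then 1 else 0)"
    using ins_lem[OF v'P gG] unfolding S_def by auto
  have mbT: "mb T > 1" using assms(1) card_mbr by simp
  have "mb S \<ge> 2"
  proof (cases "hasB T'")
    case True
    have "mb g > 0" using mb_pos col_notW_hasB gG by auto
    then show ?thesis using ins True by simp
  next
    case False
    have e1: "mb T = mb (subt T a)" using prune_lem[OF aP] False unfolding T'_def by blast
    have "subt T' a = subt T s" unfolding T'_def using aP by (simp add: subt_repl)
    then have "\<not> hasB (subt T s)" using False hasB_sub[of a T'] aP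
      by (metis T'_def pos_repl_out self_append_conv)
    then have "mb (subt T s) = 0" using mb_pos by auto
    moreover have "col (Node l r) \<noteq> B" using gG gs by (cases bu) auto
    ultimately have "mb (subt T a) = mb g" using lr gs by (cases bu) auto
    then show ?thesis using e1 mbT ins by simp
  qed
  then show ?thesis unfolding S compatible_def card_mbr by simp
qed

end
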